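(* The $\mathbf k$-linear map $\varphi:\mathrm{WCQSym}\to\mathrm{QSym}$ defined on the basis by $\varphi(M_\alpha)=(-1)^{\ell_\varepsilon(\alpha)}M_{\bar\alpha}$ if $\alpha\in\mathcal C_N$ and $\varphi(M_\alpha)=0$ if $\alpha\in\mathcal C_\varepsilon$ is a surjective Hopf algebra homomorphism.
   Context: $\mathbf{k}$ is a commutative ring containing $\mathbb{Q}$. $\tilde{\mathbb N}=\mathbb N\cup\{\varepsilon\}$ with $0+\varepsilon=\varepsilon+\varepsilon=\varepsilon$ and $n+\varepsilon=n$ for integers $n\ge1$. $\mathbf{k}[[X]]_{\tilde{\mathbb N}}$, $X=\{x_1<x_2<\cdots\}$, is the algebra of possibly infinite linear combinations of formal monomials $\prod x_i^{f(x_i)}$, $f$ finitely supported $\tilde{\mathbb N}$-valued, $x^0=1$, multiplied by adding exponents in $\tilde{\mathbb N}$. An $\tilde{\mathbb N}$-composition is a finite (possibly empty) sequence $\alpha=(\alpha_1,\dots,\alpha_k)$ of elements of $\{\varepsilon,1,2,\dots\}$, $\ell(\alpha)=k$; $M_\alpha=\sum_{1\le i_1<\cdots<i_k}x_{i_1}^{\alpha_1}\cdots x_{i_k}^{\alpha_k}$, $M_\emptyset=1$. $\mathrm{WCQSym}$ is the $\mathbf k$-span of the (linearly independent) $M_\alpha$; it is a Hopf algebra with the power series product, coproduct $\Delta(M_{(\alpha_1,\dots,\alpha_k)})=\sum_{i=0}^kM_{(\alpha_1,\dots,\alpha_i)}\otimes M_{(\alpha_{i+1},\dots,\alpha_k)}$,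 counit $\epsilon(M_\alpha)=\delta_{\alpha,\emptyset}$, and antipode $S(M_\alpha)=(-1)^{\ell(\alpha)}\sum_{J\models\ell(\alpha)}M_{J\circ\alpha^r}$ (here $\alpha^r$ is the reversal, and for $J=(j_1,\dots,j_l)$ a sequence of positive integers summing to $\ell(\gamma)$, $J\circ\gamma$ sums consecutive blocks of $\gamma$ of sizes $j_1,\dots,j_l$ in $\tilde{\mathbb N}$). $\mathrm{QSym}$ is the span of the $M_\alpha$ with all entries positive integers, a Hopf algebra with the same formulas. $\ell_\varepsilon(\alpha)$ is the number of entries equal to $\varepsilon$; $\bar\alpha$ is $\alpha$ with its $\varepsilon$ entries deleted. $\mathcal C_\varepsilon$ is the set of $\tilde{\mathbb N}$-compositions whose first entry is $\varepsilon$; $\mathcal C_N$ is the set of all other $\tilde{\mathbb N}$-compositions (the empty one and those whose first entry is a positive integer). *)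

theory Defs
  imports Main
begin

text \<open>The extended monoid N~ = N \<union> {eps}.  NN n is the integer n, Eps is eps.\<close>
datatype ntil = Eps | NN nat

fun tadd :: "ntil \<Rightarrow> ntil \<Rightarrow> ntil" where
  "tadd (NN a) (NN b) = NN (a + b)"
| "tadd (NN n) Eps = (if n = 0 then Eps else NN n)"
| "tadd Eps (NN n) = (if n = 0 then Eps else NN n)"
| "tadd Eps Eps = Eps"

definition is_comp :: "ntil list \<Rightarrow> bool" where
  "is_comp \<alpha> \<longleftrightarrow> (\<forall>x\<in>set \<alpha>. x \<noteq> NN 0)"

text \<open>Ordinary compositions (all entries positive integers), indexing the basis of QSym.\<close>
definition is_qcomp :: "ntil list \<Rightarrow> bool" where
  "is_qcomp \<alpha> \<longleftrightarrow> is_comp \<alpha> \<and> Eps \<notin> set \<alpha>"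

definition in_C_eps :: "ntil list \<Rightarrow> bool" where
  "in_C_eps \<alpha> \<longleftrightarrow> \<alpha> \<noteq> [] \<and> hd \<alpha> = Eps"

definition in_C_N :: "ntil list \<Rightarrow> bool" where
  "in_C_N \<alpha> \<longleftrightarrow> is_comp \<alpha> \<and> \<not> in_C_eps \<alpha>"

definition ell_eps :: "ntil list \<Rightarrow> nat" where
  "ell_eps \<alpha> = length (filter (\<lambda>x. x = Eps) \<alpha>)"

definition bar :: "ntil list \<Rightarrow> ntil list" where
  "bar \<alpha> = filter (\<lambda>x. x \<noteq> Eps) \<alpha>"

text \<open>Formal monomials: exponent functions on the variables x_0 < x_1 < ... (indexed by nat),
  finitely supported.  Power series: coefficient functions on monomials.\<close>
type_synonym mono = "nat \<Rightarrow> ntil"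
type_synonym 'k pser = "mono \<Rightarrow> 'k"

definition fin_mono :: "mono \<Rightarrow> bool" where
  "fin_mono f \<longleftrightarrow> finite {i. f i \<noteq> NN 0}"

text \<open>expo [i1,...,ik] [a1,...,ak] is the exponent function of x_{i1}^{a1} ... x_{ik}^{ak}
  (for distinct indices).\<close>
fun expo :: "nat list \<Rightarrow> ntil list \<Rightarrow> mono" where
  "expo (i # is) (a # as) = (expo is as)(i := a)"
| "expo _ _ = (\<lambda>_. NN 0)"

text \<open>Monomial quasisymmetric function M_alpha as a power series: the coefficient of a monomial
  is the number of index tuples i1 < ... < ik producing it.\<close>
definition Mser :: "ntil list \<Rightarrow> 'k::comm_ring_1 pser" where
  "Mser \<alpha> f = of_nat (card {is. sorted_wrt (<) is \<and> length is = length \<alpha> \<and> expo is \<alpha> = f})"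

definition ps_mult :: "'k::comm_ring_1 pser \<Rightarrow> 'k pser \<Rightarrow> 'k pser" where
  "ps_mult p q f = (\<Sum>(g, h) \<in> {(g, h). fin_mono g \<and> fin_mono h \<and> (\<forall>i. f i = tadd (g i) (h i))}.
                       p g * q h)"

text \<open>Elements of WCQSym (resp. QSym) are represented by their (finitely supported) coordinate
  vectors with respect to the basis (M_alpha); this is faithful since the M_alpha are linearly
  independent.  The same for the tensor square, with basis M_alpha (x) M_beta.\<close>
definition supp :: "('a \<Rightarrow> 'k::zero) \<Rightarrow> 'a set" where
  "supp a = {x. a x \<noteq> 0}"

definition Wvec :: "(ntil list \<Rightarrow> 'k::comm_ring_1) set" where
  "Wvec = {a. finite (supp a) \<and> (\<forall>\<alpha>. a \<alpha> \<noteq> 0 \<longrightarrow> is_comp \<alpha>)}"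

definition Qvec :: "(ntil list \<Rightarrow> 'k::comm_ring_1) set" where
  "Qvec = {a. finite (supp a) \<and> (\<forall>\<alpha>. a \<alpha> \<noteq> 0 \<longrightarrow> is_qcomp \<alpha>)}"

definition realize :: "(ntil list \<Rightarrow> 'k::comm_ring_1) \<Rightarrow> 'k pser" where
  "realize a f = (\<Sum>\<alpha>\<in>supp a. a \<alpha> * Mser \<alpha> f)"

definition unit_vec :: "ntil list \<Rightarrow> 'k::comm_ring_1" where
  "unit_vec \<alpha> = (if \<alpha> = [] then 1 else 0)"

definition counit :: "(ntil list \<Rightarrow> 'k::comm_ring_1) \<Rightarrow> 'k" where
  "counit a = (\<Sum>\<alpha>\<in>supp a. a \<alpha> * (if \<alpha> = [] then 1 else 0))"

text \<open>Coproduct Delta(M_alpha) = sum_i M_(alpha_1..alpha_i) (x) M_(alpha_{i+1}..alpha_k),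
  extended linearly; result as coordinates w.r.t. the basis M_beta (x) M_gamma.\<close>
definition coprod :: "(ntil list \<Rightarrow> 'k::comm_ring_1) \<Rightarrow> (ntil list \<times> ntil list \<Rightarrow> 'k)" where
  "coprod a = (\<lambda>(\<beta>, \<gamma>). \<Sum>\<alpha>\<in>supp a. a \<alpha> *
       of_nat (card {i. i \<le> length \<alpha> \<and> take i \<alpha> = \<beta> \<and> drop i \<alpha> = \<gamma>}))"

definition tsum :: "ntil list \<Rightarrow> ntil" where
  "tsum xs = foldr tadd xs (NN 0)"

fun blocks :: "nat list \<Rightarrow> ntil list \<Rightarrow> ntil list" where
  "blocks [] _ = []"
| "blocks (j # J) \<gamma> = tsum (take j \<gamma>) # blocks J (drop j \<gamma>)"

definition ncomps :: "nat \<Rightarrow> nat list set" where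
  "ncomps n = {J. (\<forall>j\<in>set J. 0 < j) \<and> sum_list J = n}"

text \<open>Antipode S(M_alpha) = (-1)^l(alpha) sum_{J |= l(alpha)} M_{J o alpha^r}, extended linearly.\<close>
definition antipode :: "(ntil list \<Rightarrow> 'k::comm_ring_1) \<Rightarrow> (ntil list \<Rightarrow> 'k)" where
  "antipode a = (\<lambda>\<beta>. \<Sum>\<alpha>\<in>supp a. a \<alpha> * (-1) ^ length \<alpha> *
       of_nat (card {J \<in> ncomps (length \<alpha>). blocks J (rev \<alpha>) = \<beta>}))"

definition phi_basis :: "ntil list \<Rightarrow> ntil list \<Rightarrow> 'k::comm_ring_1" where
  "phi_basis \<alpha> \<beta> = (if in_C_N \<alpha> \<and> \<beta> = bar \<alpha> then (-1) ^ ell_eps \<alpha> else 0)"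

definition phi :: "(ntil list \<Rightarrow> 'k::comm_ring_1) \<Rightarrow> (ntil list \<Rightarrow> 'k)" where
  "phi a = (\<lambda>\<beta>. \<Sum>\<alpha>\<in>supp a. a \<alpha> * phi_basis \<alpha> \<beta>)"

definition phi2 :: "(ntil list \<times> ntil list \<Rightarrow> 'k::comm_ring_1) \<Rightarrow> (ntil list \<times> ntil list \<Rightarrow> 'k)" where
  "phi2 d = (\<lambda>(\<beta>', \<gamma>'). \<Sum>(\<beta>, \<gamma>)\<in>supp d. d (\<beta>, \<gamma>) * phi_basis \<beta> \<beta>' * phi_basis \<gamma> \<gamma>')"

end

theory Submission
  imports Defs
begin


lemma tadd_comm: "tadd x y = tadd y x" by (cases x; cases y) auto
lemma tadd_assoc: "tadd (tadd x y) z = tadd x (tadd y z)" by (cases x; cases y; cases z) auto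
lemma tadd_0L[simp]: "tadd (NN 0) x = x" by (cases x) auto
lemma tadd_0R[simp]: "tadd x (NN 0) = x" by (cases x) auto
lemma tadd_eq_0: "tadd x y = NN 0 \<longleftrightarrow> x = NN 0 \<and> y = NN 0" by (cases x; cases y) auto
lemma tadd_eq_0': "NN 0 = tadd x y \<longleftrightarrow> x = NN 0 \<and> y = NN 0" by (cases x; cases y) auto
lemma tadd_Eps_nz: "y \<noteq> NN 0 \<Longrightarrow> tadd Eps y = y" by (cases y) auto
lemma tadd_nz_Eps: "y \<noteq> NN 0 \<Longrightarrow> tadd y Eps = y" by (cases y) auto

definition sg :: "ntil list \<Rightarrow> 'k::comm_ring_1" where "sg a = (-1) ^ ell_eps a"

fun psi :: "ntil list \<Rightarrow> ntil list \<Rightarrow> 'k::comm_ring_1" where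
  "psi [] b = (if b = [] then 1 else 0)"
| "psi (Eps # a) b = - psi a b"
| "psi (NN n # a) b = (if n = 0 then 0 else (case b of [] \<Rightarrow> 0 | c # b' \<Rightarrow> if c = NN n then psi a b' else 0))"

lemma sg_simps[simp]: "sg [] = 1" "sg (Eps # a) = - sg a" "sg (NN n # a) = sg a"
  by (auto simp: sg_def ell_eps_def)

lemma bar_simps[simp]: "bar [] = []" "bar (Eps # a) = bar a" "bar (NN n # a) = NN n # bar a"
  by (auto simp: bar_def)

lemma is_comp_simps[simp]: "is_comp []" "is_comp (x # a) \<longleftrightarrow> x \<noteq> NN 0 \<and> is_comp a"
  by (auto simp: is_comp_def)

lemma psi_eq: "psi a b = (if is_comp a \<and> b = bar a then sg a else 0)"
proof (induction a arbitrary: b)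
  case Nil then show ?case by simp
next
  case (Cons x a) then show ?case
    by (cases x) (auto split: list.splits)
qed

lemma phib_eq: "phi_basis a b = (if a \<noteq> [] \<and> hd a = Eps then 0 else psi a b)"
  by (auto simp: phi_basis_def psi_eq in_C_N_def in_C_eps_def sg_def)

lemma psi_split: "(\<Sum>i\<le>length a. psi (take i a) b * phi_basis (drop i a) c) = (psi a (b @ c) :: 'k::comm_ring_1)"
proof (induction a arbitrary: b c)
  case Nil then show ?case by (simp add: phib_eq)
next
  case (Cons x a)
  have s: "(\<Sum>i\<le>length (x # a). psi (take i (x # a)) b * phi_basis (drop i (x # a)) c) =
     psi [] b * phi_basis (x # a) c + (\<Sum>i\<le>length a. psi (x # take i a) b * phi_basis (drop i a) c :: 'k)"
    by (simp only: length_Cons sum.atMost_Suc_shift) simp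
  show ?case
  proof (cases x)
    case Eps
    then show ?thesis unfolding s using Cons.IH[of b c]
      by (simp add: phib_eq sum_negf)
  next
    case (NN n)
    show ?thesis
    proof (cases "n = 0")
      case True then show ?thesis unfolding s using NN by (simp add: phib_eq psi_eq)
    next
      case False
      show ?thesis
      proof (cases b)
        case Nil then show ?thesis unfolding s using NN False by (simp add: phib_eq)
      next
        case (Cons y b')
        then show ?thesis unfolding s using NN False Cons.IH[of b' c]
          by (auto simp: sum_distrib_left)
      qed
    qed
  qed
qed

lemma phib_split: "(\<Sum>i\<le>length a. phi_basis (take i a) b * phi_basis (drop i a) c) = (phi_basis a (b @ c) :: 'k::comm_ring_1)"
proof (cases "a \<noteq> [] \<and> hd a = Eps")
  case True
  then obtain a' where a: "a = Eps # a'" by (cases a) auto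
  show ?thesis unfolding a
    by (simp only: length_Cons sum.atMost_Suc_shift) (simp add: phib_eq)
next
  case False
  have tk: "phi_basis (take i a) b = psi (take i a) b" for i
    using False by (cases a; cases i) (auto simp: phib_eq)
  have "(\<Sum>i\<le>length a. phi_basis (take i a) b * phi_basis (drop i a) c) = (\<Sum>i\<le>length a. psi (take i a) b * phi_basis (drop i a) c :: 'k)"
    by (simp only: tk)
  also have "\<dots> = psi a (b @ c)" by (rule psi_split)
  also have "\<dots> = phi_basis a (b @ c)" using False by (auto simp: phib_eq)
  finally show ?thesis .
qed

fun qsh :: "ntil list \<Rightarrow> ntil list \<Rightarrow> ntil list list" where
  "qsh [] v = [v]"
| "qsh (x # u) [] = [x # u]"
| "qsh (x # u) (y # v) = map (Cons x) (qsh u (y # v)) @ map (Cons y) (qsh (x # u) v) @ map (Cons (tadd x y)) (qsh u v)"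

lemma sum_list_neg[simp]: "sum_list (map (\<lambda>x. - f x) xs) = - sum_list (map f xs :: 'k::ab_group_add list)"
  by (induction xs) auto

lemma sum_list_if_const[simp]: "sum_list (map (\<lambda>x. if P then f x else 0) xs) = (if P then sum_list (map f xs) else (0::'k::comm_monoid_add))"
  by (induction xs) auto

lemma qsh_Nil2[simp]: "qsh u [] = [u]" by (cases u) auto

lemma sum_psi_Cons: "sum_list (map (\<lambda>d. psi (x # d) b) A) =
  (if x = Eps then - sum_list (map (\<lambda>d. psi d b) A) else if x = NN 0 then 0 else
   (case b of [] \<Rightarrow> 0 | c # b' \<Rightarrow> if c = x then sum_list (map (\<lambda>d. psi d b') A) else (0::'k::comm_ring_1)))"
  by (induction A) (cases x; auto split: list.splits)+

lemma count_Cons: "count_list (map (Cons x) A) b = (case b of [] \<Rightarrow> 0 | c # b' \<Rightarrow> if c = x then count_list A b' else 0)"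
  by (induction A) (auto split: list.splits)

lemma psi_qsh: "is_comp u \<Longrightarrow> is_comp v \<Longrightarrow>
  sum_list (map (\<lambda>d. psi d b) (qsh u v)) = sg u * sg v * (of_nat (count_list (qsh (bar u) (bar v)) b) :: 'k::comm_ring_1)"
proof (induction u v arbitrary: b rule: qsh.induct)
  case (1 v) then show ?case by (simp add: psi_eq)
next
  case (2 x u) then show ?case by (cases "x = Eps") (auto simp: psi_eq)
next
  case (3 x u y v)
  note IH = "3.IH"[OF _ _ ]
  show ?case
  proof (cases x)
    case Eps note x = this
    show ?thesis
    proof (cases y)
      case Eps
      show ?thesis using x Eps 3 by (simp add: sum_psi_Cons count_Cons algebra_simps o_def)
    next
      case (NN m)
      with 3 have m: "m \<noteq> 0" by simp
      show ?thesis using x NN m 3 by (cases b) (auto simp add: sum_psi_Cons count_Cons algebra_simps o_def split: list.splits)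
    qed
  next
    case (NN n) note x = this
    with 3 have n: "n \<noteq> 0" by simp
    show ?thesis
    proof (cases y)
      case Eps
      show ?thesis using x Eps n 3 by (cases b) (auto simp add: sum_psi_Cons count_Cons algebra_simps o_def split: list.splits)
    next
      case (NN m)
      with 3 have m: "m \<noteq> 0" by simp
      show ?thesis using x NN m n 3 by (cases b) (auto simp add: sum_psi_Cons count_Cons algebra_simps o_def split: list.splits)
    qed
  qed
qed

definition fc :: "ntil list \<Rightarrow> 'k::comm_ring_1" where
  "fc a = (if a \<noteq> [] \<and> hd a = Eps then 0 else sg a)"

lemma phib_Cons: "phi_basis (z # d) b = (if z = Eps then 0 else psi (z # d) b)"
  by (simp add: phib_eq)

lemma sum_phib_Cons: "sum_list (map (\<lambda>d. phi_basis (z # d) b) A) = (if z = Eps then 0 else sum_list (map (\<lambda>d. psi (z # d) b) A))"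
  by (induction A) (auto simp: phib_Cons)

lemma phib_qsh: assumes "is_comp u" "is_comp v"
  shows "sum_list (map (\<lambda>d. phi_basis d b) (qsh u v)) = fc u * fc v * (of_nat (count_list (qsh (bar u) (bar v)) b) :: 'k::comm_ring_1)"
proof (cases u)
  case Nil then show ?thesis using assms by (simp add: phib_eq psi_eq fc_def)
next
  case (Cons x u')
  show ?thesis
  proof (cases v)
    case Nil then show ?thesis using assms Cons by (simp add: phib_eq psi_eq fc_def)
  next
    case (Cons y v')
    note uv = \<open>u = x # u'\<close> Cons
    have tot: "sum_list (map (\<lambda>d. psi d b) (qsh u v)) = sg u * sg v * (of_nat (count_list (qsh (bar u) (bar v)) b) :: 'k)"
      using psi_qsh assms by blast
    show ?thesis
    proof (cases "x = Eps")
      case xE: True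
      show ?thesis
      proof (cases "y = Eps")
        case True then show ?thesis using xE uv by (simp add: sum_phib_Cons o_def fc_def)
      next
        case False
        with assms uv have "y \<noteq> NN 0" by simp
        then have ty: "tadd x y = y" using xE tadd_Eps_nz by simp
        have b1: "sum_list (map (\<lambda>d. psi (x # d) b) (qsh u' (y # v'))) = - (sg u' * sg v * (of_nat (count_list (qsh (bar u') (bar v)) b) :: 'k))"
          using psi_qsh[of u' v b] assms uv xE by (simp add: o_def)
        show ?thesis using tot b1 False xE uv ty
          by (simp add: sum_phib_Cons o_def fc_def algebra_simps)
      qed
    next
      case xN: False
      show ?thesis
      proof (cases "y = Eps")
        case True
        with assms uv xN have "x \<noteq> NN 0" by simp
        then have ty: "tadd x y = x" using True tadd_nz_Eps by simp
        have b2: "sum_list (map (\<lambda>d. psi (y # d) b) (qsh (x # u') v')) = - (sg u * sg v' * (of_nat (count_list (qsh (bar u) (bar v')) b) :: 'k))"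
          using psi_qsh[of u v' b] assms uv True by (simp add: o_def)
        show ?thesis using tot b2 True xN uv ty
          by (simp add: sum_phib_Cons o_def fc_def algebra_simps)
      next
        case False
        with assms uv xN have "tadd x y \<noteq> Eps" by (cases x; cases y) auto
        then show ?thesis using tot False xN uv
          by (simp add: sum_phib_Cons o_def fc_def algebra_simps)
      qed
    qed
  qed
qed

fun inc :: "nat list \<Rightarrow> nat list" where
  "inc [] = []"
| "inc (j # J) = Suc j # J"

fun cl :: "nat \<Rightarrow> nat list list" where
  "cl 0 = [[]]"
| "cl (Suc 0) = [[1]]"
| "cl (Suc (Suc n)) = map (Cons 1) (cl (Suc n)) @ map inc (cl (Suc n))"

lemma inc_ne: "J \<noteq> [] \<Longrightarrow> inc J \<noteq> [] \<and> hd (inc J) = Suc (hd J)" by (cases J) auto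

lemma inc_inj: "J1 \<noteq> [] \<Longrightarrow> J2 \<noteq> [] \<Longrightarrow> inc J1 = inc J2 \<Longrightarrow> J1 = J2"
  by (cases J1; cases J2) auto

lemma cl_ne: "J \<in> set (cl (Suc n)) \<Longrightarrow> J \<noteq> [] \<and> hd J \<ge> 1"
proof (induction n arbitrary: J)
  case 0 then show ?case by simp
next
  case (Suc n)
  then consider "J \<in> Cons 1 ` set (cl (Suc n))" | J0 where "J0 \<in> set (cl (Suc n))" "J = inc J0" by auto
  then show ?case
  proof cases
    case 1 then show ?thesis by auto
  next
    case 2 then show ?thesis using Suc.IH[of J0] inc_ne[of J0] by auto
  qed
qed

lemma cl_ne': assumes "J \<in> set (cl (Suc n))" obtains j J' where "J = Suc j # J'"
proof -
  from cl_ne[OF assms] have "J \<noteq> []" "hd J \<ge> 1" by auto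
  then have "J = Suc (hd J - 1) # tl J" by (cases J) auto
  then show ?thesis using that by blast
qed

lemma tsum_simps[simp]: "tsum [] = NN 0" "tsum (x # xs) = tadd x (tsum xs)"
  by (auto simp: tsum_def)

lemma blocks_inc: "J \<in> set (cl (Suc n)) \<Longrightarrow> g \<noteq> [] \<Longrightarrow> blocks (inc J) (x # g) = blocks J (tadd x (hd g) # tl g)"
proof -
  assume J: "J \<in> set (cl (Suc n))" and g: "g \<noteq> []"
  from cl_ne[OF J] obtain j J' where JJ: "J = Suc j # J'" by (cases J; cases "hd J") auto
  from g obtain y g' where gg: "g = y # g'" by (cases g) auto
  show ?thesis unfolding JJ gg by (simp add: tadd_assoc)
qed

lemma G_split: assumes "g \<noteq> []"
  shows "sum_list (map (\<lambda>J. F (blocks J (x # g))) (cl (Suc (length g)))) =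
    sum_list (map (\<lambda>J. F (x # blocks J g)) (cl (length g))) +
    sum_list (map (\<lambda>J. F (blocks J (tadd x (hd g) # tl g))) (cl (length g)))"
proof -
  obtain n where n: "length g = Suc n" using assms by (cases g) auto
  have "sum_list (map (\<lambda>J. F (blocks J (tadd x (hd g) # tl g))) (cl (Suc n))) =
        sum_list (map (\<lambda>J. F (blocks (inc J) (x # g))) (cl (Suc n)))"
    by (rule arg_cong[where f=sum_list], rule map_cong[OF refl]) (simp add: blocks_inc assms)
  then show ?thesis unfolding n by (simp add: o_def)
qed

definition Bpsi :: "ntil list \<Rightarrow> ntil list \<Rightarrow> 'k::comm_ring_1" where
  "Bpsi g b = sum_list (map (\<lambda>J. psi (blocks J g) b) (cl (length g)))"
definition Bphi :: "ntil list \<Rightarrow> ntil list \<Rightarrow> 'k::comm_ring_1" where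
  "Bphi g b = sum_list (map (\<lambda>J. phi_basis (blocks J g) b) (cl (length g)))"
definition Tq :: "ntil list \<Rightarrow> ntil list \<Rightarrow> 'k::comm_ring_1" where
  "Tq g b = sum_list (map (\<lambda>J. if blocks J g = b then 1 else 0) (cl (length g)))"

lemma sum_list_Cons_ind: "sum_list (map (\<lambda>J. if x # f J = b then 1 else 0) L) =
   (case b of [] \<Rightarrow> 0 | c # b' \<Rightarrow> if c = x then sum_list (map (\<lambda>J. if f J = b' then 1 else 0) L) else (0::'k::comm_ring_1))"
  by (induction L) (auto split: list.splits)

lemma sum_list_psi_Cons: "n \<noteq> 0 \<Longrightarrow> sum_list (map (\<lambda>J. psi (NN n # f J) b) L) =
   (case b of [] \<Rightarrow> 0 | c # b' \<Rightarrow> if c = NN n then sum_list (map (\<lambda>J. psi (f J) b') L) else (0::'k::comm_ring_1))"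
  by (induction L) (auto split: list.splits)

lemma Bpsi_Eps: assumes "is_comp g" "g \<noteq> []" shows "Bpsi (Eps # g) b = (0::'k::comm_ring_1)"
proof -
  have h: "tadd Eps (hd g) = hd g" using assms by (cases g) (auto simp: tadd_Eps_nz)
  show ?thesis unfolding Bpsi_def using G_split[OF assms(2), of "\<lambda>w. psi w b" Eps] assms(2)
    by (simp add: h o_def)
qed

lemma Bpsi_Cons: assumes "g \<noteq> []" "n \<noteq> 0"
  shows "Bpsi (NN n # g) b = (case b of [] \<Rightarrow> 0 | c # b' \<Rightarrow> if c = NN n then Bpsi g b' else 0) + (Bpsi (tadd (NN n) (hd g) # tl g) b :: 'k::comm_ring_1)"
  unfolding Bpsi_def using G_split[OF assms(1), of "\<lambda>w. psi w b" "NN n"] assms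
  by (cases b) simp_all

lemma Tq_Cons: assumes "g \<noteq> []"
  shows "Tq (x # g) b = (case b of [] \<Rightarrow> 0 | c # b' \<Rightarrow> if c = x then Tq g b' else 0) + (Tq (tadd x (hd g) # tl g) b :: 'k::comm_ring_1)"
proof -
  obtain y g' where g: "g = y # g'" using assms by (cases g) auto
  have G: "sum_list (map (\<lambda>J. if blocks J (x # y # g') = b then 1 else 0) (cl (Suc (Suc (length g'))))) =
    sum_list (map (\<lambda>J. if x # blocks J (y # g') = b then 1 else 0) (cl (Suc (length g')))) +
    sum_list (map (\<lambda>J. if blocks J (tadd x y # g') = b then 1 else (0::'k)) (cl (Suc (length g'))))"
    using G_split[OF assms(1), of "\<lambda>w. if w = b then 1 else 0" x] unfolding g by simp
  show ?thesis
  proof (cases b)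
    case (Cons c b')
    then show ?thesis using G unfolding g by (cases "c = x") (auto simp: Tq_def)
  qed (use G g in \<open>simp add: Tq_def\<close>)
qed

lemma Bpsi_main: "is_comp g \<Longrightarrow> g \<noteq> [] \<Longrightarrow> hd g \<noteq> Eps \<Longrightarrow>
   Bpsi g b = (if last g = Eps then 0 else (Tq (bar g) b :: 'k::comm_ring_1))"
proof (induction "length g" arbitrary: g b rule: less_induct)
  case less
  from less.prems obtain n g' where g: "g = NN n # g'" and n: "n \<noteq> 0" by (cases g; cases "hd g") auto
  show ?case
  proof (cases g')
    case Nil
    show ?thesis unfolding g Nil using n by (cases b) (auto simp: Bpsi_def Tq_def)
  next
    case (Cons y g'')
    have gne: "g' \<noteq> []" using Cons by simp
    have y0: "y \<noteq> NN 0" "is_comp g''" using less.prems Cons g by auto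
    show ?thesis
    proof (cases y)
      case Eps
      show ?thesis
      proof (cases "g'' = []")
        case True
        then show ?thesis using Eps Cons g n
          by (auto simp: Bpsi_Cons Bpsi_def Tq_def psi_eq sg_def ell_eps_def split: list.splits)
      next
        case False
        have z: "Bpsi (Eps # g'') b' = (0::'k)" for b' by (rule Bpsi_Eps[OF y0(2) False])
        have "Bpsi g b = (Bpsi (NN n # g'') b :: 'k)"
          unfolding g Cons Eps using Bpsi_Cons[where 'k='k, OF gne n, of b, unfolded Cons Eps] z n by (simp add: tadd_nz_Eps split: list.splits)
        also have "\<dots> = (if last (NN n # g'') = Eps then 0 else Tq (bar (NN n # g'')) b)"
          using less.hyps[of "NN n # g''"] g Cons y0 n by simp
        finally show ?thesis using g Cons Eps False by simp
      qed
    next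
      case (NN m)
      with y0 have m: "m \<noteq> 0" by simp
      have IH1: "Bpsi g' b' = (if last g' = Eps then 0 else (Tq (bar g') b' :: 'k))" for b'
        using less.hyps[of g'] g Cons NN less.prems by auto
      have IH2: "Bpsi (NN (n + m) # g'') b = (if last (NN (n + m) # g'') = Eps then 0 else (Tq (bar (NN (n + m) # g'')) b :: 'k))"
        using less.hyps[of "NN (n + m) # g''"] g Cons NN y0 n by simp
      have lst: "last g' = Eps \<longleftrightarrow> last (NN (n + m) # g'') = Eps" "last g = last g'"
        using Cons NN g by auto
      have "Tq (bar g) b = (case b of [] \<Rightarrow> 0 | c # b' \<Rightarrow> if c = NN n then Tq (bar g') b' else 0) + (Tq (NN (n + m) # bar g'') b :: 'k)"
        using Tq_Cons[of "bar g'" "NN n" b] g Cons NN by simp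
      then show ?thesis using Bpsi_Cons[where 'k='k, OF gne n, of b] IH1 IH2 lst g Cons NN
        by (auto split: list.splits)
    qed
  qed
qed

lemma tadd_NN_ne_Eps: "n \<noteq> 0 \<Longrightarrow> tadd (NN n) z \<noteq> Eps" by (cases z) auto

lemma Bphi_main: "is_comp g \<Longrightarrow>
   Bphi g b = (if g \<noteq> [] \<and> last g = Eps then 0 else (Tq (bar g) b :: 'k::comm_ring_1))"
proof (induction g arbitrary: b)
  case Nil then show ?case by (simp add: Bphi_def Tq_def phib_eq)
next
  case (Cons x g')
  show ?case
  proof (cases x)
    case (NN n)
    with Cons.prems have n: "n \<noteq> 0" by simp
    have "Bphi (x # g') b = (Bpsi (x # g') b :: 'k)"
      unfolding Bphi_def Bpsi_def
    proof (rule arg_cong[where f=sum_list], rule map_cong[OF refl])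
      fix J assume J: "J \<in> set (cl (length (x # g')))"
      then obtain j J' where JJ: "J = Suc j # J'" using cl_ne'[of J "length g'"] by auto
      show "phi_basis (blocks J (x # g')) b = psi (blocks J (x # g')) b"
        unfolding JJ using NN n tadd_NN_ne_Eps by (simp add: phib_eq)
    qed
    then show ?thesis using Bpsi_main[of "x # g'" b] Cons.prems NN by simp
  next
    case Eps
    show ?thesis
    proof (cases "g' = []")
      case True then show ?thesis using Eps by (simp add: Bphi_def phib_eq)
    next
      case False
      have h: "tadd Eps (hd g') = hd g'" using Cons.prems False by (cases g') (auto simp: tadd_Eps_nz)
      have "Bphi (x # g') b = (Bphi g' b :: 'k)"
        unfolding Bphi_def using G_split[OF False, of "\<lambda>w. phi_basis w b" Eps] False Eps h
        by (simp add: phib_Cons)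
      then show ?thesis using Cons.IH[of b] Cons.prems Eps False by simp
    qed
  qed
qed

lemma zero_comp: "\<forall>j\<in>set J. 0 < j \<Longrightarrow> sum_list J = (0::nat) \<Longrightarrow> J = []"
  by (cases J) auto

lemma ncomps_0: "ncomps 0 = {[]}"
  using zero_comp by (auto simp: ncomps_def)

lemma set_cl: "set (cl n) = ncomps n"
proof (induction n rule: cl.induct)
  case 1 then show ?case by (simp add: ncomps_0)
next
  case 2
  show ?case
  proof
    show "set (cl (Suc 0)) \<subseteq> ncomps (Suc 0)" by (auto simp: ncomps_def)
    show "ncomps (Suc 0) \<subseteq> set (cl (Suc 0))"
    proof
      fix J assume "J \<in> ncomps (Suc 0)"
      then have J: "\<forall>j\<in>set J. 0 < j" "sum_list J = 1" by (auto simp: ncomps_def)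
      then obtain j J' where JJ: "J = j # J'" by (cases J) auto
      with J have "j > 0" "j + sum_list J' = 1" by auto
      then have "j = 1" "sum_list J' = 0" by arith+
      with J JJ have "J' = []" using zero_comp[of J'] by simp
      then show "J \<in> set (cl (Suc 0))" using JJ \<open>j = 1\<close> by simp
    qed
  qed
next
  case (3 n)
  show ?case
  proof
    show "set (cl (Suc (Suc n))) \<subseteq> ncomps (Suc (Suc n))"
    proof
      fix J assume "J \<in> set (cl (Suc (Suc n)))"
      then consider J0 where "J0 \<in> set (cl (Suc n))" "J = 1 # J0" | J0 where "J0 \<in> set (cl (Suc n))" "J = inc J0" by auto
      then show "J \<in> ncomps (Suc (Suc n))"
      proof cases
        case 1 then show ?thesis using "3.IH" by (auto simp: ncomps_def)
      next
        case 2
        obtain j J' where "J0 = Suc j # J'" using cl_ne'[OF 2(1)] by blast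
        then show ?thesis using 2 "3.IH" by (auto simp: ncomps_def)
      qed
    qed
    show "ncomps (Suc (Suc n)) \<subseteq> set (cl (Suc (Suc n)))"
    proof
      fix J assume "J \<in> ncomps (Suc (Suc n))"
      then have J: "\<forall>j\<in>set J. 0 < j" "sum_list J = Suc (Suc n)" by (auto simp: ncomps_def)
      then obtain j J' where JJ: "J = j # J'" by (cases J) auto
      show "J \<in> set (cl (Suc (Suc n)))"
      proof (cases "j = 1")
        case True
        then have "J' \<in> ncomps (Suc n)" using J JJ by (auto simp: ncomps_def)
        then show ?thesis using True JJ "3.IH" by auto
      next
        case False
        then have j: "j = Suc (j - 1)" "j - 1 > 0" using J JJ by auto
        then have "(j - 1) # J' \<in> ncomps (Suc n)" using J JJ by (auto simp: ncomps_def)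
        moreover have "J = inc ((j - 1) # J')" using JJ j by simp
        ultimately have "J \<in> inc ` set (cl (Suc n))" using "3.IH" by blast
        then show ?thesis by simp
      qed
    qed
  qed
qed

lemma distinct_cl: "distinct (cl n)"
proof (induction n rule: cl.induct)
  case (3 n)
  have inj: "inj_on inc (set (cl (Suc n)))"
  proof
    fix J1 J2 assume "J1 \<in> set (cl (Suc n))" "J2 \<in> set (cl (Suc n))" "inc J1 = inc J2"
    then show "J1 = J2" using cl_ne[of J1 n] cl_ne[of J2 n] inc_inj[of J1 J2] by blast
  qed
  have dis: "1 # J1 \<noteq> inc J2" if "J2 \<in> set (cl (Suc n))" for J1 J2
    using cl_ne[OF that] inc_ne[of J2] by (metis Suc_le_eq list.sel(1) nat_less_le)
  have d1: "distinct (map (Cons 1) (cl (Suc n)))" using 3 by (simp add: distinct_map)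
  have d2: "distinct (map inc (cl (Suc n)))" using 3 inj by (simp add: distinct_map)
  have d3: "set (map (Cons 1) (cl (Suc n))) \<inter> set (map inc (cl (Suc n))) = {}" using dis by auto
  show ?case using d1 d2 d3 by (simp only: cl.simps distinct_append)
qed auto



lemma card_filter_list: "distinct xs \<Longrightarrow> of_nat (card {x \<in> set xs. P x}) = sum_list (map (\<lambda>x. if P x then 1 else (0::'k::comm_semiring_1)) xs)"
proof -
  assume d: "distinct xs"
  have l: "of_nat (length (filter P xs)) = sum_list (map (\<lambda>x. if P x then 1 else (0::'k)) xs)"
    by (induction xs) auto
  have "{x \<in> set xs. P x} = set (filter P xs)" by auto
  then have "card {x \<in> set xs. P x} = length (filter P xs)" using d by (metis distinct_card distinct_filter)
  then show ?thesis using l by simp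
qed

lemma card_ncomps: "of_nat (card {J \<in> ncomps n. P J}) = sum_list (map (\<lambda>J. if P J then 1 else (0::'k::comm_semiring_1)) (cl n))"
  using card_filter_list[OF distinct_cl[of n], of P] by (simp add: set_cl)

lemma supp_superset: "finite S \<Longrightarrow> supp v \<subseteq> S \<Longrightarrow> (\<Sum>x\<in>supp v. v x * K x) = (\<Sum>x\<in>S. v x * (K x :: 'k::comm_ring_1))"
  by (rule sum.mono_neutral_left) (auto simp: supp_def)

lemma Wvec_D: "a \<in> Wvec \<Longrightarrow> finite (supp a)" "a \<in> Wvec \<Longrightarrow> x \<in> supp a \<Longrightarrow> is_comp x"
  by (auto simp: Wvec_def supp_def)

lemma phi_basis_comp: "is_comp a \<Longrightarrow> phi_basis a b = (if b = bar a then fc a else (0::'k::comm_ring_1))"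
  by (simp add: phib_eq psi_eq fc_def)

lemma supp_phi: "supp (phi (a :: ntil list \<Rightarrow> 'k::comm_ring_1)) \<subseteq> bar ` supp a"
proof
  fix b assume "b \<in> supp (phi a)"
  then have "(\<Sum>x\<in>supp a. a x * phi_basis x b) \<noteq> 0" by (simp add: supp_def phi_def)
  then have "\<exists>x\<in>supp a. a x * phi_basis x b \<noteq> 0" by (metis (mono_tags, lifting) sum.neutral)
  then obtain x where "x \<in> supp a" "phi_basis x b \<noteq> (0::'k)" by force
  then show "b \<in> bar ` supp a" unfolding phi_basis_def by (metis image_eqI)
qed

lemma phi_sum: assumes "a \<in> Wvec"
  shows "(\<Sum>y\<in>supp (phi a). phi a y * K y) = (\<Sum>x\<in>supp a. a x * fc x * (K (bar x) :: 'k::comm_ring_1))"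
proof -
  have fin: "finite (supp a)" using Wvec_D assms by blast
  have "(\<Sum>y\<in>supp (phi a). phi a y * K y) = (\<Sum>y\<in>bar ` supp a. phi a y * K y)"
    by (rule supp_superset) (use fin supp_phi in auto)
  also have "\<dots> = (\<Sum>y\<in>bar ` supp a. \<Sum>x\<in>supp a. a x * phi_basis x y * K y)"
    by (simp add: phi_def sum_distrib_right)
  also have "\<dots> = (\<Sum>x\<in>supp a. \<Sum>y\<in>bar ` supp a. a x * phi_basis x y * K y)"
    by (rule sum.swap)
  also have "\<dots> = (\<Sum>x\<in>supp a. a x * fc x * K (bar x))"
  proof (rule sum.cong[OF refl])
    fix x assume x: "x \<in> supp a"
    have c: "is_comp x" using Wvec_D assms x by blast
    have "(\<Sum>y\<in>bar ` supp a. a x * phi_basis x y * K y) = (\<Sum>y\<in>bar ` supp a. if y = bar x then a x * fc x * K (bar x) else 0)"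
      by (rule sum.cong) (auto simp: phi_basis_comp[OF c])
    also have "\<dots> = a x * fc x * K (bar x)" using fin x by (simp add: sum.delta)
    finally show "(\<Sum>y\<in>bar ` supp a. a x * phi_basis x y * K y) = a x * fc x * K (bar x)" .
  qed
  finally show ?thesis .
qed

lemma len_bar: "length x = ell_eps x + length (bar x)"
  unfolding ell_eps_def bar_def using sum_length_filter_compl[of "\<lambda>y. y = Eps" x] by simp

lemma antipode_basis: assumes "is_comp x"
  shows "(-1) ^ length x * Bphi (rev x) b = fc x * ((-1) ^ length (bar x) * (Tq (rev (bar x)) b :: 'k::comm_ring_1))"
proof -
  have c: "is_comp (rev x)" using assms by (simp add: is_comp_def)
  have br: "bar (rev x) = rev (bar x)" by (simp add: bar_def rev_filter)
  have l: "x \<noteq> [] \<Longrightarrow> last (rev x) = hd x" by (cases x) auto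
  have p: "(-1) ^ length x = sg x * ((-1) ^ length (bar x) :: 'k)"
    unfolding sg_def by (subst len_bar) (simp add: power_add)
  show ?thesis using Bphi_main[OF c, of b] l p br by (auto simp: fc_def)
qed

lemma antipode_phi: assumes "a \<in> Wvec"
  shows "antipode (phi a) b = (\<Sum>x\<in>supp a. a x * fc x * ((-1) ^ length (bar x) * (Tq (rev (bar x)) b :: 'k::comm_ring_1)))"
proof -
  have "antipode (phi a) b = (\<Sum>y\<in>supp (phi a). phi a y * ((-1) ^ length y * (Tq (rev y) b :: 'k)))"
    unfolding antipode_def by (simp add: card_ncomps Tq_def mult.assoc)
  also have "\<dots> = (\<Sum>x\<in>supp a. a x * fc x * ((-1) ^ length (bar x) * Tq (rev (bar x)) b))"
    by (rule phi_sum[OF assms])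
  finally show ?thesis .
qed

lemma ite_mult: "(if P then 1 else 0) * g = (if P then g else (0::'k::comm_ring_1))" by simp

lemma sum_list_zero: "(\<And>y. y \<in> set xs \<Longrightarrow> f y = 0) \<Longrightarrow> sum_list (map f xs) = (0::'k::comm_monoid_add)"
  by (induction xs) auto

lemma sum_over_D: "finite D \<Longrightarrow> f ` set L \<subseteq> D \<Longrightarrow>
  (\<Sum>d\<in>D. sum_list (map (\<lambda>J. if f J = d then 1 else 0) L) * G d) = sum_list (map (\<lambda>J. (G (f J) :: 'k::comm_ring_1)) L)"
proof (induction L)
  case Nil then show ?case by simp
next
  case (Cons J L)
  have "(\<Sum>d\<in>D. sum_list (map (\<lambda>J. if f J = d then 1 else 0) (J # L)) * G d) =
        (\<Sum>d\<in>D. (if f J = d then G d else 0)) + (\<Sum>d\<in>D. sum_list (map (\<lambda>J. if f J = d then 1 else 0) L) * G d)"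
    by (simp add: distrib_right sum.distrib ite_mult)
  also have "(\<Sum>d\<in>D. (if f J = d then G d else 0)) = G (f J)" using Cons.prems by (simp add: sum.delta)
  finally show ?case using Cons by simp
qed

lemma phi_antipode: assumes "a \<in> Wvec"
  shows "phi (antipode a) b = (\<Sum>x\<in>supp a. a x * ((-1) ^ length x * (Bphi (rev x) b :: 'k::comm_ring_1)))"
proof -
  define D where "D = (\<Union>x\<in>supp a. (\<lambda>J. blocks J (rev x)) ` set (cl (length x)))"
  have fin: "finite (supp a)" using Wvec_D assms by blast
  then have finD: "finite D" unfolding D_def by auto
  have av: "antipode a d = (\<Sum>x\<in>supp a. a x * (-1) ^ length x *
      sum_list (map (\<lambda>J. if blocks J (rev x) = d then 1 else (0::'k)) (cl (length x))))" for d
    unfolding antipode_def by (simp add: card_ncomps)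
  have sD: "supp (antipode a) \<subseteq> D"
  proof
    fix d assume d: "d \<in> supp (antipode a)"
    show "d \<in> D"
    proof (rule ccontr)
      assume "d \<notin> D"
      then have "sum_list (map (\<lambda>J. if blocks J (rev x) = d then 1 else (0::'k)) (cl (length x))) = 0" if "x \<in> supp a" for x
        using that unfolding D_def by (intro sum_list_zero) auto
      then have "antipode a d = 0" unfolding av by simp
      then show False using d by (simp add: supp_def)
    qed
  qed
  have "phi (antipode a) b = (\<Sum>d\<in>D. antipode a d * phi_basis d b)"
    unfolding phi_def by (rule supp_superset[OF finD sD])
  also have "\<dots> = (\<Sum>d\<in>D. \<Sum>x\<in>supp a. a x * (-1) ^ length x *
      (sum_list (map (\<lambda>J. if blocks J (rev x) = d then 1 else (0::'k)) (cl (length x))) * phi_basis d b))"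
    unfolding av by (simp add: sum_distrib_right mult.assoc)
  also have "\<dots> = (\<Sum>x\<in>supp a. a x * (-1) ^ length x * (\<Sum>d\<in>D.
      sum_list (map (\<lambda>J. if blocks J (rev x) = d then 1 else (0::'k)) (cl (length x))) * phi_basis d b))"
    by (subst sum.swap) (simp add: sum_distrib_left)
  also have "\<dots> = (\<Sum>x\<in>supp a. a x * ((-1) ^ length x * Bphi (rev x) b))"
  proof (rule sum.cong[OF refl])
    fix x assume x: "x \<in> supp a"
    have "(\<lambda>J. blocks J (rev x)) ` set (cl (length x)) \<subseteq> D" using x unfolding D_def by auto
    from sum_over_D[where 'k='k, OF finD this, of "\<lambda>d. phi_basis d b"]
    show "a x * (-1) ^ length x * (\<Sum>d\<in>D. sum_list (map (\<lambda>J. if blocks J (rev x) = d then 1 else (0::'k)) (cl (length x))) * phi_basis d b) =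
          a x * ((-1) ^ length x * Bphi (rev x) b)"
      by (simp add: Bphi_def)
  qed
  finally show ?thesis .
qed

lemma antipode_comm: assumes "a \<in> Wvec" shows "antipode (phi a) = (phi (antipode a) :: ntil list \<Rightarrow> 'k::comm_ring_1)"
proof
  fix b
  show "antipode (phi a) b = phi (antipode a) b"
    unfolding antipode_phi[OF assms] phi_antipode[OF assms]
  proof (rule sum.cong[OF refl])
    fix x assume "x \<in> supp a"
    then have "is_comp x" using Wvec_D[OF assms] by blast
    from antipode_basis[where 'k='k, OF this, of b]
    show "a x * fc x * ((-1) ^ length (bar x) * (Tq (rev (bar x)) b :: 'k)) = a x * ((-1) ^ length x * Bphi (rev x) b)"
      by (simp add: mult.assoc)
  qed
qed

lemma Qvec_W: "q \<in> Qvec \<Longrightarrow> q \<in> Wvec"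
  by (auto simp: Qvec_def Wvec_def is_qcomp_def)

lemma phi_Qvec: assumes "a \<in> Wvec" shows "phi a \<in> (Qvec :: (ntil list \<Rightarrow> 'k::comm_ring_1) set)"
proof -
  have fin: "finite (supp a)" using Wvec_D assms by blast
  have s: "supp (phi a) \<subseteq> bar ` supp a" by (rule supp_phi)
  have "is_qcomp b" if "phi a b \<noteq> 0" for b
  proof -
    from that have "b \<in> supp (phi a)" by (simp add: supp_def)
    with s obtain x where x: "x \<in> supp a" "b = bar x" by blast
    then have "is_comp x" using Wvec_D assms by blast
    then show ?thesis using x by (auto simp: is_qcomp_def is_comp_def bar_def)
  qed
  moreover have "finite (supp (phi a))" using s fin finite_subset by blast
  ultimately show ?thesis by (simp add: Qvec_def)
qed

lemma phi_basis_q: "is_qcomp x \<Longrightarrow> phi_basis x b = (if b = x then 1 else (0::'k::comm_ring_1))"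
proof -
  assume q: "is_qcomp x"
  then have "bar x = x" "ell_eps x = 0" "\<not> in_C_eps x" "is_comp x"
    by (auto simp: is_qcomp_def bar_def ell_eps_def in_C_eps_def filter_id_conv filter_empty_conv)
       (metis hd_in_set)
  then show ?thesis by (auto simp: phi_basis_def in_C_N_def)
qed

lemma phi_surj: assumes "q \<in> Qvec" shows "phi q = (q :: ntil list \<Rightarrow> 'k::comm_ring_1)"
proof
  fix b
  have fin: "finite (supp q)" and c: "\<And>x. x \<in> supp q \<Longrightarrow> is_qcomp x" using assms by (auto simp: Qvec_def supp_def)
  have "phi q b = (\<Sum>x\<in>supp q. if b = x then q x else 0)"
    unfolding phi_def by (rule sum.cong) (auto simp: phi_basis_q c)
  also have "\<dots> = q b" using fin by (simp add: sum.delta supp_def)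
  finally show "phi q b = q b" .
qed

lemma phi_unit: "phi (unit_vec :: ntil list \<Rightarrow> 'k::comm_ring_1) = unit_vec"
proof
  fix b
  have "supp (unit_vec :: ntil list \<Rightarrow> 'k) = {[]}" by (auto simp: supp_def unit_vec_def)
  then show "phi (unit_vec :: ntil list \<Rightarrow> 'k) b = unit_vec b"
    by (simp add: phi_def unit_vec_def phib_eq)
qed

lemma counit_eq: "finite (supp v) \<Longrightarrow> counit v = v []"
  unfolding counit_def by (simp add: sum.delta' supp_def if_distrib cong: if_cong) 

lemma phi_basis_Nil: "phi_basis x [] = (if x = [] then 1 else (0::'k::comm_ring_1))"
proof (cases x)
  case (Cons y x')
  have "\<not> (in_C_N x \<and> [] = bar x)"
  proof
    assume h: "in_C_N x \<and> [] = bar x"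
    then have "y = Eps" using Cons by (cases y) (auto simp: bar_def)
    then show False using h Cons by (simp add: in_C_N_def in_C_eps_def)
  qed
  then show ?thesis using Cons unfolding phi_basis_def by auto
qed (simp add: phi_basis_def in_C_N_def in_C_eps_def ell_eps_def bar_def)

lemma counit_comm: assumes "a \<in> Wvec" shows "counit (phi a) = (counit a :: 'k::comm_ring_1)"
proof -
  have fin: "finite (supp a)" using Wvec_D assms by blast
  have q: "phi a \<in> (Qvec :: (ntil list \<Rightarrow> 'k) set)" by (rule phi_Qvec[OF assms])
  then have fq: "finite (supp (phi a))" by (simp add: Qvec_def)
  have "phi a [] = (\<Sum>x\<in>supp a. if x = [] then a x else 0)"
    unfolding phi_def by (rule sum.cong) (auto simp: phi_basis_Nil)
  also have "\<dots> = a []" using fin by (simp add: sum.delta' supp_def)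
  finally show ?thesis using counit_eq[OF fq] counit_eq[OF fin] by simp
qed

lemma card_split: "card {i. i \<le> length x \<and> take i x = b \<and> drop i x = c} = (if x = b @ c then 1 else 0)"
proof (cases "x = b @ c")
  case True
  have "{i. i \<le> length x \<and> take i x = b \<and> drop i x = c} = {length b}"
  proof
    show "{i. i \<le> length x \<and> take i x = b \<and> drop i x = c} \<subseteq> {length b}"
    proof
      fix i assume "i \<in> {i. i \<le> length x \<and> take i x = b \<and> drop i x = c}"
      then have "i \<le> length x" "take i x = b" by auto
      then have "length b = i" by auto
      then show "i \<in> {length b}" by simp
    qed
  qed (use True in auto)
  then show ?thesis using True by simp
next
  case False
  have "x = b @ c" if "take i x = b" "drop i x = c" for i
    using that append_take_drop_id[of i x] by simp
  then have "{i. i \<le> length x \<and> take i x = b \<and> drop i x = c} = {}"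
    using False by blast
  then show ?thesis using False by simp
qed

lemma coprod_eq: "finite (supp a) \<Longrightarrow> coprod a (b, c) = (a (b @ c) :: 'k::comm_ring_1)"
  unfolding coprod_def by (simp add: card_split sum.delta' supp_def if_distrib cong: if_cong)

lemma coprod_comm: assumes "a \<in> Wvec" shows "phi2 (coprod a) = (coprod (phi a) :: _ \<Rightarrow> 'k::comm_ring_1)"
proof
  fix p :: "ntil list \<times> ntil list"
  obtain b' c' where p: "p = (b', c')" by fastforce
  have fin: "finite (supp a)" using Wvec_D assms by blast
  have fq: "finite (supp (phi a))" using phi_Qvec[OF assms] by (simp add: Qvec_def)
  define h where "h = (\<lambda>(x::ntil list, i::nat). (take i x, drop i x))"
  define A where "A = (SIGMA x:supp a. {..length x})"
  have sc: "supp (coprod a) = h ` A"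
  proof
    show "supp (coprod a) \<subseteq> h ` A"
    proof
      fix q assume "q \<in> supp (coprod a)"
      moreover obtain b c where q: "q = (b, c)" by fastforce
      ultimately have "a (b @ c) \<noteq> 0" by (simp add: supp_def coprod_eq[OF fin])
      then have "(b @ c, length b) \<in> A" "h (b @ c, length b) = q" by (auto simp: A_def supp_def h_def q)
      then show "q \<in> h ` A" by (metis image_eqI)
    qed
    show "h ` A \<subseteq> supp (coprod a)"
      by (auto simp: A_def h_def supp_def coprod_eq[OF fin])
  qed
  have inj: "inj_on h A"
  proof
    fix u v assume uv: "u \<in> A" "v \<in> A" "h u = h v"
    obtain x i y j where u: "u = (x, i)" and v: "v = (y, j)" by fastforce
    from uv have e: "take i x = take j y" "drop i x = drop j y" "i \<le> length x" "j \<le> length y"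
      unfolding u v A_def h_def by auto
    have "x = y" using e(1,2) append_take_drop_id[of i x] append_take_drop_id[of j y] by simp
    moreover have "i = j" using e(1,3,4) \<open>x = y\<close> length_take[of i x] length_take[of j y] by (metis min_absorb2)
    ultimately show "u = v" using u v by simp
  qed
  have "phi2 (coprod a) p = (\<Sum>q\<in>h ` A. coprod a q * phi_basis (fst q) b' * phi_basis (snd q) c')"
    unfolding phi2_def p sc by (simp add: case_prod_beta)
  also have "\<dots> = (\<Sum>u\<in>A. coprod a (h u) * phi_basis (fst (h u)) b' * phi_basis (snd (h u)) c')"
    by (simp add: sum.reindex[OF inj])
  also have "\<dots> = (\<Sum>x\<in>supp a. \<Sum>i\<le>length x. a x * (phi_basis (take i x) b' * phi_basis (drop i x) c'))"
    unfolding A_def using fin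
    by (subst sum.Sigma) (auto simp: h_def coprod_eq[OF fin] mult.assoc split: prod.splits intro!: sum.cong)
  also have "\<dots> = (\<Sum>x\<in>supp a. a x * phi_basis x (b' @ c'))"
    by (simp add: sum_distrib_left[symmetric] phib_split)
  also have "\<dots> = coprod (phi a) p" unfolding p coprod_eq[OF fq] by (simp add: phi_def)
  finally show "phi2 (coprod a) p = coprod (phi a) p" .
qed

definition supm :: "mono \<Rightarrow> nat set" where "supm f = {i. f i \<noteq> NN 0}"
definition compm :: "mono \<Rightarrow> ntil list" where "compm f = map f (sorted_list_of_set (supm f))"

lemma expo_props: "sorted_wrt (<) ks \<Longrightarrow> length ks = length a \<Longrightarrow> is_comp a \<Longrightarrow>
   supm (expo ks a) = set ks \<and> map (expo ks a) ks = a"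
proof (induction ks a rule: list_induct2')
  case (4 i ks x a)
  then have IH: "supm (expo ks a) = set ks" "map (expo ks a) ks = a" "i \<notin> set ks" "x \<noteq> NN 0" by auto
  show ?case
  proof
    show "supm (expo (i # ks) (x # a)) = set (i # ks)" using IH by (auto simp: supm_def)
    have "map ((expo ks a)(i := x)) ks = map (expo ks a) ks" using IH(3) by (intro map_cong) auto
    then show "map (expo (i # ks) (x # a)) (i # ks) = x # a" using IH by simp
  qed
qed (auto simp: supm_def)

lemma expo_map: "distinct ks \<Longrightarrow> expo ks (map f ks) = (\<lambda>i. if i \<in> set ks then f i else NN 0)"
  by (induction ks) (auto simp: fun_eq_iff)

lemma supm_expo_fin: "finite (supm (expo ks a))"
proof (induction ks a rule: expo.induct)
  case (1 i ks a as)
  have "supm (expo (i # ks) (a # as)) \<subseteq> insert i (supm (expo ks as))" by (auto simp: supm_def)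
  then show ?case using 1 finite_subset by blast
qed (auto simp: supm_def)

lemma Mser_eq: assumes "is_comp a"
  shows "Mser a f = (if fin_mono f \<and> compm f = a then 1 else (0::'k::comm_ring_1))"
proof -
  let ?S = "{ks. sorted_wrt (<) ks \<and> length ks = length a \<and> expo ks a = f}"
  have S: "?S = (if fin_mono f \<and> compm f = a then {sorted_list_of_set (supm f)} else {})"
  proof (cases "fin_mono f \<and> compm f = a")
    case True
    let ?L = "sorted_list_of_set (supm f)"
    have fin: "finite (supm f)" using True by (simp add: fin_mono_def supm_def)
    have L: "sorted_wrt (<) ?L" "distinct ?L" "set ?L = supm f" using fin by auto
    have len: "length ?L = length a" using True unfolding compm_def by (metis length_map)
    have e: "expo ?L a = f"
    proof -
      have "a = map f ?L" using True by (simp add: compm_def)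
      then have "expo ?L a = (\<lambda>i. if i \<in> set ?L then f i else NN 0)" using expo_map[OF L(2)] by simp
      also have "\<dots> = f" using L(3) by (auto simp: supm_def fun_eq_iff)
      finally show ?thesis .
    qed
    have "?S = {?L}"
    proof
      show "{?L} \<subseteq> ?S" using L len e by auto
      show "?S \<subseteq> {?L}"
      proof
        fix ks assume "ks \<in> ?S"
        then have i: "sorted_wrt (<) ks" "length ks = length a" "expo ks a = f" by auto
        have "supm f = set ks" using expo_props[OF i(1,2) assms] i(3) by simp
        then have "ks = ?L" using i(1) by (simp add: sorted_list_of_set.idem_if_sorted_distinct strict_sorted_iff)
        then show "ks \<in> {?L}" by simp
      qed
    qed
    then show ?thesis using True by simp
  next
    case False
    have "?S = {}"
    proof (rule ccontr)
      assume "?S \<noteq> {}"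
      then obtain ks where i: "sorted_wrt (<) ks" "length ks = length a" "expo ks a = f" by auto
      have p: "supm f = set ks" "map f ks = a" using expo_props[OF i(1,2) assms] i(3) by auto
      then have "fin_mono f" by (simp add: fin_mono_def supm_def[symmetric])
      moreover have "compm f = a" using p i(1) by (simp add: compm_def sorted_list_of_set.idem_if_sorted_distinct strict_sorted_iff)
      ultimately show False using False by simp
    qed
    then show ?thesis using False by (subst if_not_P) auto
  qed
  have "Mser a f = (of_nat (card ?S) :: 'k)" by (simp add: Mser_def)
  also have "\<dots> = (if fin_mono f \<and> compm f = a then 1 else 0)" by (simp only: S) simp
  finally show ?thesis .
qed

lemma realize_eq: assumes "a \<in> Wvec"
  shows "realize a f = (if fin_mono f then a (compm f) else (0::'k::comm_ring_1))"
proof -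
  have fin: "finite (supp a)" using Wvec_D assms by blast
  have "realize a f = (\<Sum>x\<in>supp a. if x = compm f then (if fin_mono f then a x else 0) else 0)"
    unfolding realize_def by (rule sum.cong) (auto simp: Mser_eq Wvec_D[OF assms])
  also have "\<dots> = (if fin_mono f then a (compm f) else 0)" using fin by (simp add: sum.delta' supp_def)
  finally show ?thesis .
qed

lemma compm_expo: assumes "is_comp a" shows "fin_mono (expo [0..<length a] a) \<and> compm (expo [0..<length a] a) = a"
proof -
  have "supm (expo [0..<length a] a) = {0..<length a}" "map (expo [0..<length a] a) [0..<length a] = a"
    using expo_props[of "[0..<length a]" a] assms by auto
  then show ?thesis by (simp add: fin_mono_def supm_def[symmetric] compm_def)
qed

definition decs :: "ntil \<Rightarrow> (ntil \<times> ntil) set" where "decs x = {(p, q). tadd p q = x}"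
definition match0 :: "ntil \<Rightarrow> ntil list \<Rightarrow> bool" where "match0 p w = (p = NN 0 \<or> (w \<noteq> [] \<and> hd w = p))"
definition rest0 :: "ntil \<Rightarrow> ntil list \<Rightarrow> ntil list" where "rest0 p w = (if p = NN 0 then w else tl w)"
definition cons0 :: "ntil \<Rightarrow> ntil list \<Rightarrow> ntil list" where "cons0 p w = (if p = NN 0 then w else p # w)"

lemma cons0_eq: "cons0 p v = w \<longleftrightarrow> match0 p w \<and> v = rest0 p w"
  by (cases w) (auto simp: cons0_def match0_def rest0_def)

lemma match_cons0[simp]: "match0 p (cons0 p w)" "rest0 p (cons0 p w) = w"
  by (auto simp: cons0_def match0_def rest0_def)

lemma finite_decs: "finite (decs x)"
proof -
  define k where "k = (case x of NN n \<Rightarrow> n | Eps \<Rightarrow> 0)"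
  define V where "V = insert Eps (NN ` {..k})"
  have "decs x \<subseteq> V \<times> V"
  proof
    fix z assume "z \<in> decs x"
    then obtain p q where z: "z = (p, q)" "tadd p q = x" by (auto simp: decs_def)
    then show "z \<in> V \<times> V" unfolding V_def k_def
      by (cases p; cases q; cases x) (auto split: if_splits)
  qed
  moreover have "finite V" by (simp add: V_def)
  ultimately show ?thesis using finite_subset by blast
qed

lemma sum_restrict: "finite A \<Longrightarrow> finite B \<Longrightarrow> (\<And>z. z \<in> A \<Longrightarrow> z \<notin> B \<Longrightarrow> F z = 0) \<Longrightarrow>
   sum F A = sum (\<lambda>z. if z \<in> A then F z else (0::'a::comm_monoid_add)) B"
proof -
  assume fA: "finite A" and fB: "finite B" and z: "\<And>z. z \<in> A \<Longrightarrow> z \<notin> B \<Longrightarrow> F z = 0"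
  have "sum F A = sum F (B \<inter> A)" by (rule sum.mono_neutral_right) (use fA z in auto)
  also have "\<dots> = sum (\<lambda>z. if z \<in> A then F z else 0) B" by (rule sum.inter_restrict[OF fB])
  finally show ?thesis .
qed

definition MM :: "ntil list \<Rightarrow> ntil set" where "MM w = (case w of [] \<Rightarrow> {NN 0} | m # _ \<Rightarrow> {NN 0, m})"

lemma count_qsh_Nil: "count_list (qsh u v) [] = (if u = [] \<and> v = [] then 1 else 0)"
  by (cases u; cases v) (auto simp: count_Cons)

lemma count_qsh_Cons: assumes "is_comp u" "is_comp v" "x \<noteq> NN 0"
  shows "count_list (qsh u v) (x # w) = (\<Sum>pq\<in>decs x. if match0 (fst pq) u \<and> match0 (snd pq) v
           then count_list (qsh (rest0 (fst pq) u) (rest0 (snd pq) v)) w else 0)"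
proof -
  let ?F = "\<lambda>pq. if match0 (fst pq) u \<and> match0 (snd pq) v then count_list (qsh (rest0 (fst pq) u) (rest0 (snd pq) v)) w else 0"
  have fB: "finite (MM u \<times> MM v)" by (auto simp: MM_def split: list.splits)
  have "sum ?F (decs x) = sum (\<lambda>z. if z \<in> decs x then ?F z else 0) (MM u \<times> MM v)"
    by (rule sum_restrict[OF finite_decs fB]) (auto simp: match0_def MM_def split: list.splits)
  also have "\<dots> = count_list (qsh u v) (x # w)"
  proof (cases u)
    case Nil
    then show ?thesis using assms
      by (cases v) (auto simp: MM_def decs_def match0_def rest0_def count_Cons)
  next
    case (Cons m u')
    then have m: "m \<noteq> NN 0" using assms by simp
    show ?thesis
    proof (cases v)
      case Nil
      then show ?thesis using assms Cons m
        by (auto simp: MM_def decs_def match0_def rest0_def count_Cons)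
    next
      case (Cons n v')
      then have n: "n \<noteq> NN 0" using assms by simp
      show ?thesis using \<open>u = m # u'\<close> Cons m n assms
        by (auto simp: MM_def decs_def match0_def rest0_def count_Cons sum.cartesian_product[symmetric] tadd_eq_0)
    qed
  qed
  finally show ?thesis by simp
qed

definition Dec :: "mono \<Rightarrow> (mono \<times> mono) set" where
  "Dec f = {(g, h). fin_mono g \<and> fin_mono h \<and> (\<forall>i. f i = tadd (g i) (h i))}"

lemma fin_mono_supm: "fin_mono f \<longleftrightarrow> finite (supm f)" by (simp add: fin_mono_def supm_def)

lemma supm_upd_fin: "finite (supm g) \<Longrightarrow> finite (supm (g(p0 := p)))"
proof -
  assume "finite (supm g)"
  moreover have "supm (g(p0 := p)) \<subseteq> insert p0 (supm g)" by (auto simp: supm_def)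
  ultimately show ?thesis using finite_subset by blast
qed

lemma Dec_supm: "(g, h) \<in> Dec f \<Longrightarrow> supm g \<subseteq> supm f \<and> supm h \<subseteq> supm f"
  by (auto simp: Dec_def supm_def tadd_eq_0)

lemma Dec_nonfin: "\<not> fin_mono f \<Longrightarrow> Dec f = {}"
proof (rule ccontr)
  assume nf: "\<not> fin_mono f" and "Dec f \<noteq> {}"
  then obtain g h where gh: "(g, h) \<in> Dec f" by auto
  then have "supm f \<subseteq> supm g \<union> supm h" by (auto simp: Dec_def supm_def tadd_eq_0)
  moreover have "finite (supm g)" "finite (supm h)" using gh by (auto simp: Dec_def fin_mono_supm)
  ultimately show False using nf finite_subset by (auto simp: fin_mono_supm)
qed

lemma compm_upd: assumes "finite (supm g)" "\<forall>i\<in>supm g. p0 < i"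
  shows "compm (g(p0 := p)) = cons0 p (compm g)"
proof (cases "p = NN 0")
  case True
  have "g p0 = NN 0" using assms(2) by (auto simp: supm_def)
  then have "g(p0 := p) = g" using True by auto
  then show ?thesis using True by (simp add: cons0_def)
next
  case False
  have s: "supm (g(p0 := p)) = insert p0 (supm g)" using False by (auto simp: supm_def)
  have ni: "p0 \<notin> supm g" using assms(2) by auto
  have m: "Min (insert p0 (supm g)) = p0" by (rule Min_eqI) (use assms in auto)
  have "sorted_list_of_set (insert p0 (supm g)) = p0 # sorted_list_of_set (supm g)"
    using sorted_list_of_set_nonempty[of "insert p0 (supm g)"] assms(1) m ni by simp
  moreover have "map (g(p0 := p)) (sorted_list_of_set (supm g)) = map g (sorted_list_of_set (supm g))"
    using ni assms(1) by (intro map_cong) auto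
  ultimately show ?thesis using False by (simp add: compm_def s cons0_def)
qed

lemma is_comp_rest0: "is_comp u \<Longrightarrow> is_comp (rest0 p u)"
  by (cases u) (auto simp: rest0_def)

lemma Dec_count: "fin_mono f \<Longrightarrow> finite (Dec f) \<and> (\<forall>u v. is_comp u \<longrightarrow> is_comp v \<longrightarrow>
   card {gh \<in> Dec f. compm (fst gh) = u \<and> compm (snd gh) = v} = count_list (qsh u v) (compm f))"
proof (induction "card (supm f)" arbitrary: f)
  case 0
  then have fin: "finite (supm f)" by (simp add: fin_mono_supm)
  with 0 have "supm f = {}" by simp
  then have f: "f = (\<lambda>_. NN 0)" by (auto simp: supm_def fun_eq_iff)
  let ?z = "(\<lambda>_::nat. NN 0)"
  have D: "Dec f = {(?z, ?z)}" unfolding f by (auto simp: Dec_def fin_mono_def tadd_eq_0' fun_eq_iff)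
  have cz: "compm ?z = []" by (simp add: compm_def supm_def)
  have "{gh \<in> {(?z, ?z)}. compm (fst gh) = u \<and> compm (snd gh) = v} = (if u = [] \<and> v = [] then {(?z, ?z)} else {})" for u v
    using cz by auto
  then show ?case unfolding D using cz f count_qsh_Nil by simp
next
  case (Suc n f)
  have fin: "finite (supm f)" using Suc.prems by (simp add: fin_mono_supm)
  have ne: "supm f \<noteq> {}" using Suc.hyps(2) by auto
  define p0 where "p0 = Min (supm f)"
  define x where "x = f p0"
  define f' where "f' = f(p0 := NN 0)"
  have p0: "p0 \<in> supm f" using fin ne p0_def by simp
  have x0: "x \<noteq> NN 0" using p0 by (simp add: x_def supm_def)
  have sf': "supm f' = supm f - {p0}" by (auto simp: f'_def supm_def)
  have cf': "card (supm f') = n" using Suc.hyps(2) sf' fin p0 by simp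
  have ff': "fin_mono f'" using fin sf' by (simp add: fin_mono_supm)
  have gt: "\<forall>i\<in>supm f'. p0 < i" using sf' fin p0_def by (auto intro: Min_le le_neq_implies_less)
  have ffe: "f = f'(p0 := x)" by (auto simp: f'_def x_def)
  have cf: "compm f = x # compm f'"
    using compm_upd[of f' p0 x] fin sf' gt x0 ffe by (simp add: cons0_def)
  have IH: "finite (Dec f')" "\<And>u v. is_comp u \<Longrightarrow> is_comp v \<Longrightarrow>
     card {gh \<in> Dec f'. compm (fst gh) = u \<and> compm (snd gh) = v} = count_list (qsh u v) (compm f')"
    using Suc.hyps(1)[OF cf'[symmetric] ff'] by auto
  define \<Phi> where "\<Phi> = (\<lambda>(pq::ntil \<times> ntil, gh::mono \<times> mono). ((fst gh)(p0 := fst pq), (snd gh)(p0 := snd pq)))"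
  have sub': "supm g \<subseteq> supm f'" "supm h \<subseteq> supm f'" if "(g, h) \<in> Dec f'" for g h
    using Dec_supm[OF that] by auto
  have z': "g p0 = NN 0" "h p0 = NN 0" if "(g, h) \<in> Dec f'" for g h
    using sub'[OF that] gt by (auto simp: supm_def)
  have DecEq: "Dec f = \<Phi> ` (decs x \<times> Dec f')"
  proof
    show "\<Phi> ` (decs x \<times> Dec f') \<subseteq> Dec f"
    proof
      fix z assume "z \<in> \<Phi> ` (decs x \<times> Dec f')"
      then obtain p q g h where pq: "tadd p q = x" and gh: "(g, h) \<in> Dec f'" and z: "z = (g(p0 := p), h(p0 := q))"
        by (auto simp: \<Phi>_def decs_def)
      have "finite (supm (g(p0 := p)))" "finite (supm (h(p0 := q)))"
        using gh supm_upd_fin by (auto simp: Dec_def fin_mono_supm)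
      moreover have "\<forall>i. f i = tadd ((g(p0 := p)) i) ((h(p0 := q)) i)"
      proof
        fix i
        have "f' i = tadd (g i) (h i)" using gh by (simp add: Dec_def)
        then show "f i = tadd ((g(p0 := p)) i) ((h(p0 := q)) i)"
          using pq by (cases "i = p0") (simp_all add: f'_def x_def)
      qed
      ultimately show "z \<in> Dec f" using z by (simp add: Dec_def fin_mono_supm)
    qed
    show "Dec f \<subseteq> \<Phi> ` (decs x \<times> Dec f')"
    proof
      fix z assume z: "z \<in> Dec f"
      obtain g h where zz: "z = (g, h)" by fastforce
      have gh: "fin_mono g" "fin_mono h" "\<forall>i. f i = tadd (g i) (h i)" using z zz by (auto simp: Dec_def)
      have "(g(p0 := NN 0), h(p0 := NN 0)) \<in> Dec f'"
        using gh by (auto simp: Dec_def f'_def fin_mono_supm supm_def elim: finite_subset[rotated])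
      moreover have "(g p0, h p0) \<in> decs x" using gh by (simp add: decs_def x_def)
      moreover have "z = \<Phi> ((g p0, h p0), (g(p0 := NN 0), h(p0 := NN 0)))" using zz by (simp add: \<Phi>_def)
      ultimately show "z \<in> \<Phi> ` (decs x \<times> Dec f')" by blast
    qed
  qed
  have inj: "inj_on \<Phi> (decs x \<times> Dec f')"
  proof
    fix y1 y2 assume y: "y1 \<in> decs x \<times> Dec f'" "y2 \<in> decs x \<times> Dec f'" "\<Phi> y1 = \<Phi> y2"
    obtain p1 q1 g1 h1 where y1: "y1 = ((p1, q1), (g1, h1))" by (metis prod.collapse)
    obtain p2 q2 g2 h2 where y2: "y2 = ((p2, q2), (g2, h2))" by (metis prod.collapse)
    have e: "g1(p0 := p1) = g2(p0 := p2)" "h1(p0 := q1) = h2(p0 := q2)" using y(3) y1 y2 by (auto simp: \<Phi>_def)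
    have m: "(g1, h1) \<in> Dec f'" "(g2, h2) \<in> Dec f'" using y y1 y2 by auto
    have zz: "g1 p0 = NN 0" "h1 p0 = NN 0" "g2 p0 = NN 0" "h2 p0 = NN 0" using z'[OF m(1)] z'[OF m(2)] by auto
    have "p1 = p2" "q1 = q2" using fun_cong[OF e(1), of p0] fun_cong[OF e(2), of p0] by auto
    moreover have "g1 = g2" "h1 = h2"
      using e zz by (metis fun_upd_triv fun_upd_upd)+
    ultimately show "y1 = y2" using y1 y2 by simp
  qed
  have finD: "finite (Dec f)" unfolding DecEq using IH(1) finite_decs by auto
  have cnt: "card {gh \<in> Dec f. compm (fst gh) = u \<and> compm (snd gh) = v} = count_list (qsh u v) (compm f)"
    if u: "is_comp u" and v: "is_comp v" for u v
  proof -
    let ?C = "\<lambda>gh. compm (fst gh) = u \<and> compm (snd gh) = v"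
    let ?B = "\<lambda>pq. {gh \<in> Dec f'. match0 (fst pq) u \<and> match0 (snd pq) v \<and> compm (fst gh) = rest0 (fst pq) u \<and> compm (snd gh) = rest0 (snd pq) v}"
    have cm: "compm (fst (\<Phi> (pq, gh))) = cons0 (fst pq) (compm (fst gh))"
             "compm (snd (\<Phi> (pq, gh))) = cons0 (snd pq) (compm (snd gh))" if "gh \<in> Dec f'" for pq gh
    proof -
      obtain g h where gh: "gh = (g, h)" by fastforce
      have fg: "finite (supm g)" "finite (supm h)" using that gh by (auto simp: Dec_def fin_mono_supm)
      show "compm (fst (\<Phi> (pq, gh))) = cons0 (fst pq) (compm (fst gh))"
        using compm_upd[OF fg(1), of p0] sub'[of g h] that gh gt by (auto simp: \<Phi>_def)
      show "compm (snd (\<Phi> (pq, gh))) = cons0 (snd pq) (compm (snd gh))"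
        using compm_upd[OF fg(2), of p0] sub'[of g h] that gh gt by (auto simp: \<Phi>_def)
    qed
    have "{gh \<in> Dec f. ?C gh} = \<Phi> ` {y \<in> decs x \<times> Dec f'. ?C (\<Phi> y)}" unfolding DecEq by auto
    then have "card {gh \<in> Dec f. ?C gh} = card {y \<in> decs x \<times> Dec f'. ?C (\<Phi> y)}"
      using card_image[OF inj_on_subset[OF inj]] by (metis (no_types, lifting) mem_Collect_eq subsetI)
    also have "{y \<in> decs x \<times> Dec f'. ?C (\<Phi> y)} = Sigma (decs x) ?B"
      using cm by (auto simp: cons0_eq)
    also have "card (Sigma (decs x) ?B) = (\<Sum>pq\<in>decs x. card (?B pq))"
      by (rule card_SigmaI) (use finite_decs IH(1) in auto)
    also have "\<dots> = (\<Sum>pq\<in>decs x. if match0 (fst pq) u \<and> match0 (snd pq) v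
           then count_list (qsh (rest0 (fst pq) u) (rest0 (snd pq) v)) (compm f') else 0)"
    proof (rule sum.cong[OF refl])
      fix pq assume "pq \<in> decs x"
      show "card (?B pq) = (if match0 (fst pq) u \<and> match0 (snd pq) v
           then count_list (qsh (rest0 (fst pq) u) (rest0 (snd pq) v)) (compm f') else 0)"
        using IH(2)[OF is_comp_rest0[OF u] is_comp_rest0[OF v]] by auto
    qed
    also have "\<dots> = count_list (qsh u v) (compm f)"
      unfolding cf by (rule count_qsh_Cons[OF u v x0, symmetric])
    finally show ?thesis .
  qed
  show ?case using finD cnt by blast
qed

definition Pm :: "(ntil list \<Rightarrow> 'k::comm_ring_1) \<Rightarrow> (ntil list \<Rightarrow> 'k) \<Rightarrow> ntil list \<Rightarrow> 'k" where
  "Pm a b w = (\<Sum>u\<in>supp a. \<Sum>v\<in>supp b. a u * b v * of_nat (count_list (qsh u v) w))"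

lemma sum_ind_card: "finite A \<Longrightarrow> (\<Sum>x\<in>A. if P x then 1 else 0) = (of_nat (card {x \<in> A. P x}) :: 'k::comm_ring_1)"
  by (simp add: sum.inter_filter[symmetric])

lemma val_as_sum: "finite (supp a) \<Longrightarrow> a w = (\<Sum>u\<in>supp a. if w = u then a u else (0::'k::comm_ring_1))"
  by (simp add: sum.delta supp_def)

lemma ps_mult_eq: assumes a: "a \<in> Wvec" and b: "b \<in> Wvec"
  shows "ps_mult (realize a) (realize b) f = (if fin_mono f then Pm a b (compm f) else (0::'k::comm_ring_1))"
proof -
  have pm: "ps_mult (realize a) (realize b) f = (\<Sum>gh\<in>Dec f. realize a (fst gh) * realize b (snd gh))"
    unfolding ps_mult_def Dec_def by (simp add: case_prod_beta)
  show ?thesis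
  proof (cases "fin_mono f")
    case False
    then show ?thesis unfolding pm by (simp add: Dec_nonfin)
  next
    case True
    note DC = Dec_count[OF True]
    have fa: "finite (supp a)" and fb: "finite (supp b)" using a b Wvec_D by blast+
    have "(\<Sum>gh\<in>Dec f. realize a (fst gh) * realize b (snd gh)) =
          (\<Sum>gh\<in>Dec f. a (compm (fst gh)) * b (compm (snd gh)))"
      by (rule sum.cong[OF refl]) (auto simp: realize_eq[OF a] realize_eq[OF b] Dec_def)
    also have "\<dots> = (\<Sum>gh\<in>Dec f. \<Sum>u\<in>supp a. \<Sum>v\<in>supp b.
           a u * b v * (if compm (fst gh) = u \<and> compm (snd gh) = v then 1 else 0))"
    proof (rule sum.cong[OF refl])
      fix gh
      show "a (compm (fst gh)) * b (compm (snd gh)) = (\<Sum>u\<in>supp a. \<Sum>v\<in>supp b.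
           a u * b v * (if compm (fst gh) = u \<and> compm (snd gh) = v then 1 else 0))"
      proof -
        have "a (compm (fst gh)) * b (compm (snd gh)) = (\<Sum>u\<in>supp a. if compm (fst gh) = u then a u else 0) * (\<Sum>v\<in>supp b. if compm (snd gh) = v then b v else 0)"
          using val_as_sum[OF fa, of "compm (fst gh)"] val_as_sum[OF fb, of "compm (snd gh)"] by simp
        also have "\<dots> = (\<Sum>u\<in>supp a. \<Sum>v\<in>supp b. (if compm (fst gh) = u then a u else 0) * (if compm (snd gh) = v then b v else 0))"
          by (rule sum_product)
        also have "\<dots> = (\<Sum>u\<in>supp a. \<Sum>v\<in>supp b. a u * b v * (if compm (fst gh) = u \<and> compm (snd gh) = v then 1 else 0))"
          by (intro sum.cong refl) auto
        finally show ?thesis .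
      qed
    qed
    also have "\<dots> = (\<Sum>u\<in>supp a. \<Sum>v\<in>supp b. a u * b v *
           (\<Sum>gh\<in>Dec f. if compm (fst gh) = u \<and> compm (snd gh) = v then 1 else 0))"
      by (simp add: sum_distrib_left sum.swap[of _ "Dec f"])
    also have "\<dots> = Pm a b (compm f)"
      unfolding Pm_def
    proof (intro sum.cong refl)
      fix u v assume u: "u \<in> supp a" and v: "v \<in> supp b"
      have cu: "is_comp u" "is_comp v" using Wvec_D a b u v by blast+
      show "a u * b v * (\<Sum>gh\<in>Dec f. if compm (fst gh) = u \<and> compm (snd gh) = v then 1 else 0) =
            a u * b v * of_nat (count_list (qsh u v) (compm f))"
        using DC cu by (simp add: sum_ind_card)
    qed
    finally show ?thesis unfolding pm using True by simp
  qed
qed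

lemma sum_count: "finite D \<Longrightarrow> set xs \<subseteq> D \<Longrightarrow> (\<Sum>d\<in>D. of_nat (count_list xs d) * F d) = sum_list (map F xs :: 'k::comm_ring_1 list)"
proof (induction xs)
  case Nil then show ?case by simp
next
  case (Cons y xs)
  have "(\<Sum>d\<in>D. of_nat (count_list (y # xs) d) * F d) = (\<Sum>d\<in>D. (if y = d then F d else 0)) + (\<Sum>d\<in>D. of_nat (count_list xs d) * F d)"
    by (subst sum.distrib[symmetric], rule sum.cong) (auto simp: distrib_right)
  also have "(\<Sum>d\<in>D. (if y = d then F d else 0)) = F y" using Cons.prems by (simp add: sum.delta)
  finally show ?case using Cons by simp
qed

lemma key_mult: fixes a b c :: "ntil list \<Rightarrow> 'k::comm_ring_1"
  assumes a: "a \<in> Wvec" and b: "b \<in> Wvec" and c: "c \<in> Wvec"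
  and cab: "\<And>x. is_comp x \<Longrightarrow> c x = Pm a b x"
  shows "phi c w = Pm (phi a) (phi b) w"
proof -
  have fa: "finite (supp a)" and fb: "finite (supp b)" and fc': "finite (supp c)" using a b c Wvec_D by blast+
  define D where "D = supp c \<union> (\<Union>u\<in>supp a. \<Union>v\<in>supp b. set (qsh u v))"
  have finD: "finite D" unfolding D_def using fa fb fc' by auto
  have "phi c w = (\<Sum>x\<in>D. c x * phi_basis x w)"
    unfolding phi_def by (rule supp_superset[OF finD]) (auto simp: D_def)
  also have "\<dots> = (\<Sum>x\<in>D. Pm a b x * phi_basis x w)"
  proof (rule sum.cong[OF refl])
    fix x
    show "c x * phi_basis x w = Pm a b x * phi_basis x w"
    proof (cases "is_comp x")
      case True then show ?thesis using cab by simp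
    next
      case False then have "phi_basis x w = (0::'k)" by (simp add: phi_basis_def in_C_N_def)
      then show ?thesis by simp
    qed
  qed
  also have "\<dots> = (\<Sum>u\<in>supp a. \<Sum>v\<in>supp b. a u * b v * (\<Sum>x\<in>D. of_nat (count_list (qsh u v) x) * phi_basis x w))"
    unfolding Pm_def by (simp add: sum_distrib_right sum_distrib_left mult.assoc sum.swap[of _ D])
  also have "\<dots> = (\<Sum>u\<in>supp a. \<Sum>v\<in>supp b. a u * b v * (fc u * fc v * of_nat (count_list (qsh (bar u) (bar v)) w)))"
  proof (intro sum.cong refl)
    fix u v assume u: "u \<in> supp a" and v: "v \<in> supp b"
    have "set (qsh u v) \<subseteq> D" using u v by (auto simp: D_def)
    then have "(\<Sum>x\<in>D. of_nat (count_list (qsh u v) x) * phi_basis x w) = sum_list (map (\<lambda>x. phi_basis x w) (qsh u v) :: 'k list)"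
      by (rule sum_count[OF finD])
    also have "\<dots> = fc u * fc v * of_nat (count_list (qsh (bar u) (bar v)) w)"
      using phib_qsh Wvec_D a b u v by blast
    finally show "a u * b v * (\<Sum>x\<in>D. of_nat (count_list (qsh u v) x) * phi_basis x w) =
        a u * b v * (fc u * fc v * of_nat (count_list (qsh (bar u) (bar v)) w))" by simp
  qed
  also have "\<dots> = Pm (phi a) (phi b) w"
  proof -
    have "Pm (phi a) (phi b) w = (\<Sum>u'\<in>supp (phi a). phi a u' * (\<Sum>v'\<in>supp (phi b). phi b v' * of_nat (count_list (qsh u' v') w)))"
      unfolding Pm_def by (simp add: sum_distrib_left mult.assoc)
    also have "\<dots> = (\<Sum>u\<in>supp a. a u * fc u * (\<Sum>v'\<in>supp (phi b). phi b v' * of_nat (count_list (qsh (bar u) v') w)))"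
      by (rule phi_sum[OF a])
    also have "\<dots> = (\<Sum>u\<in>supp a. a u * fc u * (\<Sum>v\<in>supp b. b v * fc v * of_nat (count_list (qsh (bar u) (bar v)) w)))"
      by (simp add: phi_sum[OF b])
    also have "\<dots> = (\<Sum>u\<in>supp a. \<Sum>v\<in>supp b. a u * b v * (fc u * fc v * of_nat (count_list (qsh (bar u) (bar v)) w)))"
      by (simp add: sum_distrib_left mult_ac)
    finally show ?thesis by simp
  qed
  finally show ?thesis .
qed

lemma mult_comm: assumes a: "a \<in> Wvec" and b: "b \<in> Wvec" and c: "c \<in> Wvec"
  and h: "realize c = ps_mult (realize a) (realize b)"
  shows "realize (phi c) = ps_mult (realize (phi a)) (realize (phi (b :: ntil list \<Rightarrow> 'k::comm_ring_1)))"
proof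
  fix f
  have cab: "c x = Pm a b x" if "is_comp x" for x
  proof -
    let ?f = "expo [0..<length x] x"
    have e: "fin_mono ?f" "compm ?f = x" using compm_expo[OF that] by auto
    have "c x = realize c ?f" using realize_eq[OF c] e by simp
    also have "\<dots> = Pm a b x" using h ps_mult_eq[OF a b, of ?f] e by simp
    finally show ?thesis .
  qed
  have pa: "phi a \<in> Wvec" "phi b \<in> Wvec" "phi c \<in> Wvec" using phi_Qvec Qvec_W a b c by blast+
  show "realize (phi c) f = ps_mult (realize (phi a)) (realize (phi b)) f"
    using realize_eq[OF pa(3)] ps_mult_eq[OF pa(1,2)] key_mult[OF a b c cab] by simp
qed

theorem theorem3p8:
  fixes k_witness :: "'k::comm_ring_1"
  assumes contains_Q: "\<forall>n::nat. n \<noteq> 0 \<longrightarrow> (\<exists>y::'k. of_nat n * y = 1)"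
  shows
    \<comment> \<open>phi maps WCQSym into QSym\<close>
    "(\<forall>a \<in> (Wvec :: (ntil list \<Rightarrow> 'k) set). phi a \<in> Qvec)
     \<comment> \<open>surjective\<close>
     \<and> (\<forall>q \<in> (Qvec :: (ntil list \<Rightarrow> 'k) set). \<exists>a \<in> Wvec. phi a = q)
     \<comment> \<open>multiplicative (product = power series product) and unital\<close>
     \<and> (\<forall>a \<in> (Wvec :: (ntil list \<Rightarrow> 'k) set). \<forall>b \<in> Wvec. \<forall>c \<in> Wvec.
          realize c = ps_mult (realize a) (realize b) \<longrightarrow>
          realize (phi c) = ps_mult (realize (phi a)) (realize (phi b)))
     \<and> phi (unit_vec :: ntil list \<Rightarrow> 'k) = unit_vec
     \<comment> \<open>compatible with coproduct, counit and antipode\<close>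
     \<and> (\<forall>a \<in> (Wvec :: (ntil list \<Rightarrow> 'k) set). phi2 (coprod a) = coprod (phi a))
     \<and> (\<forall>a \<in> (Wvec :: (ntil list \<Rightarrow> 'k) set). counit (phi a) = counit a)
     \<and> (\<forall>a \<in> (Wvec :: (ntil list \<Rightarrow> 'k) set). antipode (phi a) = phi (antipode a))"
  proof -
  have s1: "\<forall>a \<in> (Wvec :: (ntil list \<Rightarrow> 'k) set). phi a \<in> Qvec" using phi_Qvec by blast
  have s2: "\<forall>q \<in> (Qvec :: (ntil list \<Rightarrow> 'k) set). \<exists>a \<in> Wvec. phi a = q" using phi_surj Qvec_W by metis
  have s3: "\<forall>a \<in> (Wvec :: (ntil list \<Rightarrow> 'k) set). \<forall>b \<in> Wvec. \<forall>c \<in> Wvec.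
          realize c = ps_mult (realize a) (realize b) \<longrightarrow>
          realize (phi c) = ps_mult (realize (phi a)) (realize (phi b))" using mult_comm by blast
  have s4: "phi (unit_vec :: ntil list \<Rightarrow> 'k) = unit_vec" by (rule phi_unit)
  have s5: "\<forall>a \<in> (Wvec :: (ntil list \<Rightarrow> 'k) set). phi2 (coprod a) = coprod (phi a)" using coprod_comm by blast
  have s6: "\<forall>a \<in> (Wvec :: (ntil list \<Rightarrow> 'k) set). counit (phi a) = counit a" using counit_comm by blast
  have s7: "\<forall>a \<in> (Wvec :: (ntil list \<Rightarrow> 'k) set). antipode (phi a) = phi (antipode a)" using antipode_comm by blast
  show ?thesis using s1 s2 s3 s4 s5 s6 s7 by blast
qed

end
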